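(* Let $X$ be a Tychonoff space. Then for every closed discrete set $D\subset X$ we have $|D|\le\chi((C(X),\tau_\Gamma))$, where $|D|$ is the cardinality of $D$ and $\chi$ denotes the character of the space.
   Context: $C(X)$ is the set of continuous real-valued functions on $X$, each identified with its graph in $X\times\mathbb{R}$. The graph topology $\tau_\Gamma$ on $C(X)$ has base $\{F_G: G\text{ open in }X\times\mathbb{R}\}$ where $F_G=\{f\in C(X): f\subset G\}$. The character $\chi$ of a space is the supremum over its points of the minimal cardinality of a neighbourhood base at the point (an infinite cardinal). *)

theory Defs
  imports "HOL-Analysis.Analysis"
begin

definition tychonoff_space :: "'a topology \<Rightarrow> bool" where
  "tychonoff_space X \<longleftrightarrow> completely_regular_space X \<and> t1_space X"

definition graph_of :: "'a topology \<Rightarrow> ('a \<Rightarrow> real) \<Rightarrow> ('a \<times> real) set" where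
  "graph_of X f = {(x, f x) | x. x \<in> topspace X}"

text \<open>C(X): continuous real-valued functions on X, each identified with its graph.\<close>
definition CX :: "'a topology \<Rightarrow> ('a \<times> real) set set" where
  "CX X = {graph_of X f | f. continuous_map X euclideanreal f}"

definition graph_basic :: "'a topology \<Rightarrow> ('a \<times> real) set \<Rightarrow> ('a \<times> real) set set" where
  "graph_basic X G = {f \<in> CX X. f \<subseteq> G}"

definition graph_topology :: "'a topology \<Rightarrow> ('a \<times> real) set topology" where
  "graph_topology X = topology (\<lambda>U. U \<subseteq> CX X \<and>
     (\<forall>f\<in>U. \<exists>G. openin (prod_topology X euclideanreal) G \<and> f \<in> graph_basic X G \<and> graph_basic X G \<subseteq> U))"

definition nbhd_base :: "'a topology \<Rightarrow> 'a \<Rightarrow> 'a set set \<Rightarrow> bool" where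
  "nbhd_base T p B \<longleftrightarrow> (\<forall>V\<in>B. openin T V \<and> p \<in> V) \<and>
     (\<forall>U. openin T U \<and> p \<in> U \<longrightarrow> (\<exists>V\<in>B. V \<subseteq> U))"

text \<open>character_le T K: the character of T (an infinite cardinal, the supremum over
  points of the least size of a neighbourhood base) is at most |K|.\<close>
definition character_le :: "'a topology \<Rightarrow> 'k set \<Rightarrow> bool" where
  "character_le T K \<longleftrightarrow> infinite K \<and>
     (\<forall>p\<in>topspace T. \<exists>B. nbhd_base T p B \<and> ordLeq2 (card_of B) (card_of K))"

end

theory Submission
  imports Defs
begin

lemma graph_istopology:
  "istopology (\<lambda>U. U \<subseteq> CX X \<and>
     (\<forall>f\<in>U. \<exists>G. openin (prod_topology X euclideanreal) G \<and> f \<in> graph_basic X G \<and> graph_basic X G \<subseteq> U))"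
  unfolding istopology_def
proof (rule conjI; intro allI impI)
  fix S T assume S: "S \<subseteq> CX X \<and> (\<forall>f\<in>S. \<exists>G. openin (prod_topology X euclideanreal) G \<and> f \<in> graph_basic X G \<and> graph_basic X G \<subseteq> S)"
    and T: "T \<subseteq> CX X \<and> (\<forall>f\<in>T. \<exists>G. openin (prod_topology X euclideanreal) G \<and> f \<in> graph_basic X G \<and> graph_basic X G \<subseteq> T)"
  show "S \<inter> T \<subseteq> CX X \<and> (\<forall>f\<in>S \<inter> T. \<exists>G. openin (prod_topology X euclideanreal) G \<and> f \<in> graph_basic X G \<and> graph_basic X G \<subseteq> S \<inter> T)"
  proof (intro conjI ballI)
    show "S \<inter> T \<subseteq> CX X" using S by blast
    fix f assume "f \<in> S \<inter> T"
    then have "f \<in> S" "f \<in> T" by auto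
    obtain G1 where g1: "openin (prod_topology X euclideanreal) G1" "f \<in> graph_basic X G1" "graph_basic X G1 \<subseteq> S"
      using S \<open>f \<in> S\<close> by blast
    obtain G2 where g2: "openin (prod_topology X euclideanreal) G2" "f \<in> graph_basic X G2" "graph_basic X G2 \<subseteq> T"
      using T \<open>f \<in> T\<close> by blast
    show "\<exists>G. openin (prod_topology X euclideanreal) G \<and> f \<in> graph_basic X G \<and> graph_basic X G \<subseteq> S \<inter> T"
    proof (intro exI[of _ "G1 \<inter> G2"] conjI)
      show "openin (prod_topology X euclideanreal) (G1 \<inter> G2)" using g1 g2 by (intro openin_Int) auto
      show "f \<in> graph_basic X (G1 \<inter> G2)" using g1 g2 unfolding graph_basic_def by blast
      show "graph_basic X (G1 \<inter> G2) \<subseteq> S \<inter> T" using g1 g2 unfolding graph_basic_def by blast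
    qed
  qed
next
  fix K assume K: "\<forall>S\<in>K. S \<subseteq> CX X \<and> (\<forall>f\<in>S. \<exists>G. openin (prod_topology X euclideanreal) G \<and> f \<in> graph_basic X G \<and> graph_basic X G \<subseteq> S)"
  show "\<Union> K \<subseteq> CX X \<and> (\<forall>f\<in>\<Union> K. \<exists>G. openin (prod_topology X euclideanreal) G \<and> f \<in> graph_basic X G \<and> graph_basic X G \<subseteq> \<Union> K)"
  proof (intro conjI ballI)
    show "\<Union> K \<subseteq> CX X" using K by blast
    fix f assume "f \<in> \<Union> K"
    then obtain S where "S \<in> K" "f \<in> S" by blast
    then obtain G where "openin (prod_topology X euclideanreal) G" "f \<in> graph_basic X G" "graph_basic X G \<subseteq> S"
      using K by meson
    then show "\<exists>G. openin (prod_topology X euclideanreal) G \<and> f \<in> graph_basic X G \<and> graph_basic X G \<subseteq> \<Union> K"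
      using \<open>S \<in> K\<close> by blast
  qed
qed

lemma openin_graph_topology:
  "openin (graph_topology X) U \<longleftrightarrow> U \<subseteq> CX X \<and>
     (\<forall>f\<in>U. \<exists>G. openin (prod_topology X euclideanreal) G \<and> f \<in> graph_basic X G \<and> graph_basic X G \<subseteq> U)"
  unfolding graph_topology_def by (subst topology_inverse'[OF graph_istopology]) (rule refl)

lemma openin_graph_basic:
  "openin (prod_topology X euclideanreal) G \<Longrightarrow> openin (graph_topology X) (graph_basic X G)"
  unfolding openin_graph_topology by (auto simp: graph_basic_def)

lemma bump:
  assumes cr: "completely_regular_space X"
    and G: "openin (prod_topology X euclideanreal) G"
    and z: "graph_of X (\<lambda>_. 0) \<subseteq> G"
    and d: "d \<in> topspace X"
  shows "\<exists>g. continuous_map X euclideanreal g \<and> graph_of X g \<subseteq> G \<and> g d \<noteq> 0"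
proof -
  have "(d, 0) \<in> G" using z d by (auto simp: graph_of_def)
  then have "\<exists>U W. openin X U \<and> openin euclideanreal W \<and> d \<in> U \<and> (0::real) \<in> W \<and> U \<times> W \<subseteq> G"
    by (rule openin_prod_topology_alt[THEN iffD1, OF G, rule_format])
  then obtain U W where U: "openin X U" and W: "open W" and dU: "d \<in> U" and "0 \<in> W" and UW: "U \<times> W \<subseteq> G"
    by auto
  then obtain e where e: "e > 0" "ball 0 e \<subseteq> W" using open_contains_ball by blast
  have "closedin X (topspace X - U)" using U by blast
  then obtain f :: "'a \<Rightarrow> real" where f: "continuous_map X (top_of_set {0..1}) f" "f d = 0" "f ` (topspace X - U) \<subseteq> {1}"
    using cr[unfolded completely_regular_space_def, rule_format, of "topspace X - U" d] d dU by blast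
  define g where "g x = (e/2) * (1 - f x)" for x
  have fc: "continuous_map X euclideanreal f" using f(1) by (simp add: continuous_map_in_subtopology)
  have f01: "f x \<in> {0..1}" if "x \<in> topspace X" for x
    using continuous_map_image_subset_topspace[OF f(1)] that by auto
  have gc: "continuous_map X euclideanreal g"
    unfolding g_def by (intro continuous_intros fc)
  have "graph_of X g \<subseteq> G"
  proof
    fix p assume "p \<in> graph_of X g"
    then obtain x where x: "x \<in> topspace X" "p = (x, g x)" by (auto simp: graph_of_def)
    show "p \<in> G"
    proof (cases "x \<in> U")
      case True
      have "g x \<in> ball 0 e" using f01[OF x(1)] e(1) by (auto simp: g_def dist_real_def)
      then have "(x, g x) \<in> U \<times> W" using True e(2) by blast
      then show ?thesis using UW x(2) by blast
    next
      case False
      then have "f x = 1" using f(3) x by auto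
      then have "p = (x, 0)" using x by (simp add: g_def)
      then show ?thesis using z x by (auto simp: graph_of_def)
    qed
  qed
  moreover have "g d \<noteq> 0" using f(2) e by (simp add: g_def)
  ultimately show ?thesis using gc by blast
qed

theorem theorem3p1:
  fixes X :: "'a topology" and D :: "'a set"
  assumes "tychonoff_space X"
    and "closedin X D"
    and "subtopology X D = discrete_topology D"
  shows "\<forall>K :: 'k set. character_le (graph_topology X) K \<longrightarrow> ordLeq2 (card_of D) (card_of K)"
proof (intro allI impI)
  fix K :: "'k set"
  assume ch: "character_le (graph_topology X) K"
  show "ordLeq2 (card_of D) (card_of K)"
  proof (rule ccontr)
    assume nle: "\<not> ordLeq2 (card_of D) (card_of K)"
    have cr: "completely_regular_space X" using assms(1) tychonoff_space_def by blast
    define z where "z = graph_of X (\<lambda>_. 0::real)"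
    have zC: "z \<in> CX X" unfolding z_def CX_def by auto
    have topen: "openin (prod_topology X euclideanreal) (topspace X \<times> UNIV)"
      using openin_prod_Times_iff[of X euclideanreal "topspace X" UNIV] by simp
    have zsub: "z \<subseteq> topspace X \<times> UNIV" unfolding z_def graph_of_def by blast
    have "z \<in> graph_basic X (topspace X \<times> UNIV)" using zC zsub unfolding graph_basic_def by blast
    hence ztop: "z \<in> topspace (graph_topology X)"
      using openin_subset[OF openin_graph_basic[OF topen]] by blast
    obtain B where nb: "nbhd_base (graph_topology X) z B" and cB: "ordLeq2 (card_of B) (card_of K)"
      using ch ztop unfolding character_le_def by blast
    have "ordLeq2 (card_of K) (card_of D)" using ordLeq_total[OF card_of_Well_order card_of_Well_order, of K D] nle by blast
    hence "ordLeq2 (card_of B) (card_of D)" using ordLeq_transitive[OF cB] by blast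
    then obtain h where hinj: "inj_on h B" and hB: "h ` B \<subseteq> D"
      using card_of_ordLeq[of B D] by blast
    have Dtop: "D \<subseteq> topspace X" using assms(2) closedin_subset by blast
    have "\<forall>V\<in>B. \<exists>G. openin (prod_topology X euclideanreal) G \<and> z \<in> graph_basic X G \<and> graph_basic X G \<subseteq> V"
    proof
      fix V assume "V \<in> B"
      hence "openin (graph_topology X) V" "z \<in> V" using nb unfolding nbhd_base_def by blast+
      thus "\<exists>G. openin (prod_topology X euclideanreal) G \<and> z \<in> graph_basic X G \<and> graph_basic X G \<subseteq> V"
        unfolding openin_graph_topology by blast
    qed
    then obtain GG where GG: "\<And>V. V\<in>B \<Longrightarrow> openin (prod_topology X euclideanreal) (GG V) \<and> z \<in> graph_basic X (GG V) \<and> graph_basic X (GG V) \<subseteq> V"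
      by metis
    have "\<forall>V\<in>B. \<exists>g. continuous_map X euclideanreal g \<and> graph_of X g \<subseteq> GG V \<and> g (h V) \<noteq> 0"
    proof
      fix V assume V: "V \<in> B"
      have "z \<subseteq> GG V" using GG[OF V] unfolding graph_basic_def by blast
      moreover have "h V \<in> topspace X" using V hB Dtop by blast
      ultimately show "\<exists>g. continuous_map X euclideanreal g \<and> graph_of X g \<subseteq> GG V \<and> g (h V) \<noteq> 0"
        using bump[OF cr conjunct1[OF GG[OF V]]] unfolding z_def by blast
    qed
    then obtain gg where gg: "\<And>V. V\<in>B \<Longrightarrow> continuous_map X euclideanreal (gg V) \<and> graph_of X (gg V) \<subseteq> GG V \<and> gg V (h V) \<noteq> 0"
      by metis
    define P where "P = (\<lambda>V. (h V, gg V (h V))) ` B"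
    define G0 where "G0 = topspace X \<times> UNIV - P"
    have hBclosed: "closedin X (h ` B)"
    proof (rule closedin_trans_full[OF _ assms(2)])
      show "closedin (subtopology X D) (h ` B)" using hB assms(3) by simp
    qed
    have G0open: "openin (prod_topology X euclideanreal) G0"
    proof (subst openin_subopen, intro ballI)
      fix p assume "p \<in> G0"
      then obtain x y where p: "p = (x,y)" "x \<in> topspace X" "(x,y) \<notin> P" unfolding G0_def by auto
      show "\<exists>T. openin (prod_topology X euclideanreal) T \<and> p \<in> T \<and> T \<subseteq> G0"
      proof (cases "x \<in> h ` B")
        case False
        have "openin X (topspace X - h ` B)" using hBclosed by blast
        hence "openin (prod_topology X euclideanreal) ((topspace X - h ` B) \<times> UNIV)"
          by (simp add: openin_prod_Times_iff)
        moreover have "p \<in> (topspace X - h ` B) \<times> UNIV" using p False by blast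
        moreover have "(topspace X - h ` B) \<times> UNIV \<subseteq> G0" unfolding G0_def P_def by blast
        ultimately show ?thesis by blast
      next
        case True
        then obtain V where V: "V \<in> B" "x = h V" by blast
        have "openin (subtopology X D) {x}" using assms(3) V hB by auto
        then obtain U where U: "openin X U" "{x} = U \<inter> D" unfolding openin_subtopology by blast
        have "openin (prod_topology X euclideanreal) (U \<times> (UNIV - {gg V (h V)}))"
          using U(1) by (simp add: openin_prod_Times_iff open_Diff)
        moreover have "y \<noteq> gg V (h V)" using p(3) V unfolding P_def by blast
        hence "p \<in> U \<times> (UNIV - {gg V (h V)})" using p U V by blast
        moreover have "U \<times> (UNIV - {gg V (h V)}) \<subseteq> G0"
        proof
          fix q assume q: "q \<in> U \<times> (UNIV - {gg V (h V)})"
          have "q \<in> topspace X \<times> UNIV" using q openin_subset[OF U(1)] by blast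
          moreover have "q \<notin> P"
          proof
            assume "q \<in> P"
            then obtain W where W: "W \<in> B" "q = (h W, gg W (h W))" unfolding P_def by blast
            have "h W \<in> U \<inter> D" using W q hB by blast
            hence "h W = h V" using U(2) V(2) by blast
            hence "W = V" using hinj W(1) V(1) inj_on_def by metis
            thus False using q W by simp
          qed
          ultimately show "q \<in> G0" unfolding G0_def by blast
        qed
        ultimately show ?thesis by blast
      qed
    qed
    have "z \<subseteq> G0"
    proof
      fix q assume q: "q \<in> z"
      then obtain x where x: "x \<in> topspace X" "q = (x, 0)" unfolding z_def graph_of_def by blast
      have "q \<notin> P"
      proof
        assume "q \<in> P"
        then obtain W where W: "W \<in> B" "q = (h W, gg W (h W))" unfolding P_def by blast
        thus False using gg[OF W(1)] x(2) by simp
      qed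
      thus "q \<in> G0" using x unfolding G0_def by blast
    qed
    hence "z \<in> graph_basic X G0" using zC unfolding graph_basic_def by blast
    then obtain V where V: "V \<in> B" "V \<subseteq> graph_basic X G0"
      using nb openin_graph_basic[OF G0open] unfolding nbhd_base_def by blast
    have "graph_of X (gg V) \<in> CX X" using gg[OF V(1)] unfolding CX_def by blast
    hence "graph_of X (gg V) \<in> graph_basic X (GG V)" using gg[OF V(1)] unfolding graph_basic_def by blast
    hence "graph_of X (gg V) \<in> graph_basic X G0" using GG[OF V(1)] V(2) by blast
    hence "graph_of X (gg V) \<subseteq> G0" unfolding graph_basic_def by blast
    moreover have "(h V, gg V (h V)) \<in> graph_of X (gg V)"
      using V(1) hB Dtop unfolding graph_of_def by blast
    moreover have "(h V, gg V (h V)) \<in> P" using V(1) unfolding P_def by blast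
    ultimately show False unfolding G0_def by blast
  qed
qed

end
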